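(* Assume the standing setup below and let $\rho\ge 0$. Suppose $\mathcal{G}$ is a quasi-concave hill (QCH) and $\mathbf{x}\in\mathcal{NE}_\rho$. Then $u_i(\mathbf{x}_i)=u_j(\mathbf{x}_j)$ for all $i,j\in\mathrm{supp}(\mathbf{x})$.
   Context: Standing setup: $\mathcal{G}=(\mathcal{V},\mathcal{E})$ is a finite, connected, undirected graph; $\mathcal{N}^i$ denotes the set of neighbours of node $i$. For $\rho\ge0$, $\mathcal{S}_\rho=\{\mathbf{x}\in\mathbb{R}^{|\mathcal{V}|}:\mathbf{x}\ge 0,\ \sum_{i\in\mathcal{V}}\mathbf{x}_i=\rho\}$, and $\mathrm{supp}(\mathbf{x})=\{i:\mathbf{x}_i\neq 0\}$. For each node $i$, $p_i:[0,\infty)\to\mathbb{R}$ is twice continuously differentiable and strictly concave, and $u_i:=p_i'$ (right derivative at $0$), so each $u_i$ is strictly decreasing. The maximum payoff density parameter (MPDP) of node $i$ is $\mathbf{a}_i:=u_i(0)$. The set of Nash equilibria is $\mathcal{NE}_\rho=\{\mathbf{x}\in\mathcal{S}_\rho: u_i(\mathbf{x}_i)\ge u_j(\mathbf{x}_j)\ \forall j\in\mathcal{N}^i,\ \forall i\in\mathrm{supp}(\mathbf{x})\}$. A path $\pi(1),\dots,\pi(n)$ in $\mathcal{G}$ (distinct nodes, consecutive ones adjacent) is a path with quasi-concave MPDP's if for all $1\le k\le m\le l\le n$, $\mathbf{a}_{\pi(m)}\ge\min\{\mathbf{a}_{\pi(k)},\mathbf{a}_{\pi(l)}\}$. $\mathcal{G}$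 is a quasi-concave hill (QCH) if between every two distinct nodes there exists a path with quasi-concave MPDP's. *)

theory Defs
  imports "HOL-Analysis.Analysis"
begin

definition undirected_graph :: "'a set \<Rightarrow> ('a \<Rightarrow> 'a \<Rightarrow> bool) \<Rightarrow> bool" where
  "undirected_graph V E \<longleftrightarrow> finite V \<and> (\<forall>i j. E i j \<longrightarrow> i \<in> V \<and> j \<in> V) \<and>
     (\<forall>i j. E i j \<longrightarrow> E j i) \<and> (\<forall>i. \<not> E i i)"

definition neighbours :: "('a \<Rightarrow> 'a \<Rightarrow> bool) \<Rightarrow> 'a \<Rightarrow> 'a set" where
  "neighbours E i = {j. E i j}"

definition is_path :: "'a set \<Rightarrow> ('a \<Rightarrow> 'a \<Rightarrow> bool) \<Rightarrow> 'a list \<Rightarrow> bool" where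
  "is_path V E \<pi> \<longleftrightarrow> \<pi> \<noteq> [] \<and> distinct \<pi> \<and> set \<pi> \<subseteq> V \<and>
     (\<forall>k. Suc k < length \<pi> \<longrightarrow> E (\<pi> ! k) (\<pi> ! Suc k))"

definition graph_connected :: "'a set \<Rightarrow> ('a \<Rightarrow> 'a \<Rightarrow> bool) \<Rightarrow> bool" where
  "graph_connected V E \<longleftrightarrow> V \<noteq> {} \<and>
     (\<forall>i\<in>V. \<forall>j\<in>V. \<exists>\<pi>. is_path V E \<pi> \<and> hd \<pi> = i \<and> last \<pi> = j)"

definition qc_path :: "('a \<Rightarrow> real) \<Rightarrow> 'a list \<Rightarrow> bool" where
  "qc_path a \<pi> \<longleftrightarrow> (\<forall>k m l. k \<le> m \<and> m \<le> l \<and> l < length \<pi> \<longrightarrow>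
      a (\<pi> ! m) \<ge> min (a (\<pi> ! k)) (a (\<pi> ! l)))"

definition quasi_concave_hill :: "'a set \<Rightarrow> ('a \<Rightarrow> 'a \<Rightarrow> bool) \<Rightarrow> ('a \<Rightarrow> real) \<Rightarrow> bool" where
  "quasi_concave_hill V E a \<longleftrightarrow> (\<forall>i\<in>V. \<forall>j\<in>V. i \<noteq> j \<longrightarrow>
      (\<exists>\<pi>. is_path V E \<pi> \<and> hd \<pi> = i \<and> last \<pi> = j \<and> qc_path a \<pi>))"

definition strictly_concave_on :: "real set \<Rightarrow> (real \<Rightarrow> real) \<Rightarrow> bool" where
  "strictly_concave_on S f \<longleftrightarrow> (\<forall>x\<in>S. \<forall>y\<in>S. \<forall>t. x \<noteq> y \<and> 0 < t \<and> t < 1 \<longrightarrow>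
      f ((1 - t) * x + t * y) > (1 - t) * f x + t * f y)"

definition strat_simplex :: "'a set \<Rightarrow> real \<Rightarrow> ('a \<Rightarrow> real) set" where
  "strat_simplex V \<rho> = {x. (\<forall>i\<in>V. x i \<ge> 0) \<and> (\<Sum>i\<in>V. x i) = \<rho>}"

definition supp :: "'a set \<Rightarrow> ('a \<Rightarrow> real) \<Rightarrow> 'a set" where
  "supp V x = {i\<in>V. x i \<noteq> 0}"

definition NE :: "'a set \<Rightarrow> ('a \<Rightarrow> 'a \<Rightarrow> bool) \<Rightarrow> ('a \<Rightarrow> real \<Rightarrow> real) \<Rightarrow> real \<Rightarrow> ('a \<Rightarrow> real) set" where
  "NE V E u \<rho> = {x\<in>strat_simplex V \<rho>. \<forall>i\<in>supp V x. \<forall>j\<in>neighbours E i. u i (x i) \<ge> u j (x j)}"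

end

theory Submission
  imports Defs
begin

lemma sconcD:
  assumes "strictly_concave_on S f" "x \<in> S" "y \<in> S" "x \<noteq> y" "0 < t" "t < 1"
  shows "f ((1 - t) * x + t * y) > (1 - t) * f x + t * f y"
  using assms unfolding strictly_concave_on_def by blast

lemma mono_pos:
  fixes p u :: "real \<Rightarrow> real"
  assumes pd: "\<And>t. t \<ge> 0 \<Longrightarrow> (p has_real_derivative u t) (at t within {0..})"
    and conc: "strictly_concave_on {0..} p"
    and st: "0 < s" "s < t"
  shows "u t < u s"
proof -
  have cv: "convex_on {0<..} (\<lambda>x. - p x)"
  proof (rule convex_onI)
    fix a x y :: real assume "a > 0" "a < 1" "x \<in> {0<..}" "y \<in> {0<..}"
    then show "- p ((1 - a) *\<^sub>R x + a *\<^sub>R y) \<le> (1 - a) * - p x + a * - p y"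
    proof (cases "x = y")
      case True
      have "(1 - a) *\<^sub>R x + a *\<^sub>R y = x" using True by (simp add: algebra_simps)
      then show ?thesis using True by (simp add: algebra_simps)
    next
      case False
      have "x \<in> {0..}" "y \<in> {0..}" using \<open>x \<in> {0<..}\<close> \<open>y \<in> {0<..}\<close> by auto
      then have "p ((1 - a) * x + a * y) > (1 - a) * p x + a * p y"
        by (rule sconcD[OF conc]) (use False \<open>a > 0\<close> \<open>a < 1\<close> in auto)
      then show ?thesis by simp
    qed
  qed (simp add: convex_real_interval)
  have d: "\<And>c. c > 0 \<Longrightarrow> ((\<lambda>x. - p x) has_field_derivative - u c) (at c within {0<..})"
    by (rule DERIV_minus, rule has_field_derivative_subset[OF pd]) auto
  define m where "m = (s + t) / 2"
  have m: "s < m" "m < t" using st by (auto simp: m_def)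
  have 1: "- p m - - p s \<ge> - u s * (m - s)"
    using convex_on_imp_above_tangent[OF cv, where c=s and x=m and f'="- u s"] st m d[of s] by (simp add: interior_open)
  have 2: "- p m - - p t \<ge> - u t * (m - t)"
    using convex_on_imp_above_tangent[OF cv, where c=t and x=m and f'="- u t"] st m d[of t] by (simp add: interior_open)
  have 3: "p ((1 - 1/2) * s + 1/2 * t) > (1 - 1/2) * p s + 1/2 * p t"
  proof -
    have "s \<in> {0..}" "t \<in> {0..}" "s \<noteq> t" "(0::real) < 1/2" "(1/2::real) < 1" using st by auto
    then show ?thesis by (intro sconcD[OF conc]) auto
  qed
  have e: "(1 - 1/2) * s + 1/2 * t = m" by (simp add: m_def field_simps)
  have h3: "2 * p m > p s + p t" using 3 unfolding e by (simp add: field_simps)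
  have e1: "m - s = (t - s) / 2" and e2: "m - t = - ((t - s) / 2)" by (auto simp: m_def field_simps)
  have 1: "p m - p s \<le> u s * ((t - s) / 2)" using 1 unfolding e1 by linarith
  have 2: "p m - p t \<le> - (u t * ((t - s) / 2))" using 2 unfolding e2 by linarith
  have dd: "(u s - u t) * ((t - s) / 2) = u s * ((t - s) / 2) - u t * ((t - s) / 2)"
    by (rule left_diff_distrib)
  have "(u s - u t) * ((t - s) / 2) > 0" unfolding dd using 1 2 h3 by linarith
  with st show ?thesis by (simp add: zero_less_mult_iff)
qed

lemma mono0:
  fixes p u :: "real \<Rightarrow> real"
  assumes ud: "\<And>t. t \<ge> 0 \<Longrightarrow> (u has_real_derivative u' t) (at t within {0..})"
    and pd: "\<And>t. t \<ge> 0 \<Longrightarrow> (p has_real_derivative u t) (at t within {0..})"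
    and conc: "strictly_concave_on {0..} p"
    and tp: "t > 0"
  shows "u t < u 0"
proof -
  have "continuous (at 0 within {0..}) u" using ud[of 0] by (intro DERIV_continuous) auto
  hence "(u \<longlongrightarrow> u 0) (at 0 within {0..})" by (simp add: continuous_within)
  hence lim: "(u \<longlongrightarrow> u 0) (at_right 0)"
    by (rule tendsto_within_subset) auto
  have tp2: "t/2 > 0" using tp by simp
  have ev: "eventually (\<lambda>s. u (t/2) \<le> u s) (at_right 0)"
    using eventually_at_right_real[OF tp2]
  proof eventually_elim
    case (elim s)
    then show ?case using mono_pos[OF pd conc, of s "t/2"] by auto
  qed
  have "u (t/2) \<le> u 0" by (rule tendsto_lowerbound[OF lim ev]) simp
  moreover have "u t < u (t/2)" using mono_pos[OF pd conc tp2] tp by simp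
  ultimately show ?thesis by simp
qed

theorem mainTheorem2:
  fixes V :: "'a set" and E :: "'a \<Rightarrow> 'a \<Rightarrow> bool"
    and p u u' :: "'a \<Rightarrow> real \<Rightarrow> real" and \<rho> :: real and x :: "'a \<Rightarrow> real"
  assumes graph: "undirected_graph V E" and conn: "graph_connected V E"
    and p_deriv: "\<And>i t. i \<in> V \<Longrightarrow> t \<ge> 0 \<Longrightarrow> (p i has_real_derivative u i t) (at t within {0..})"
    and u_deriv: "\<And>i t. i \<in> V \<Longrightarrow> t \<ge> 0 \<Longrightarrow> (u i has_real_derivative u' i t) (at t within {0..})"
    and u'_cont: "\<And>i. i \<in> V \<Longrightarrow> continuous_on {0..} (u' i)"
    and p_conc: "\<And>i. i \<in> V \<Longrightarrow> strictly_concave_on {0..} (p i)"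
    and rho: "\<rho> \<ge> 0"
    and qch: "quasi_concave_hill V E (\<lambda>i. u i 0)"
    and NE: "x \<in> NE V E u \<rho>"
  shows "\<forall>i\<in>supp V x. \<forall>j\<in>supp V x. u i (x i) = u j (x j)"
proof -
  have xnn: "\<And>i. i \<in> V \<Longrightarrow> x i \<ge> 0" using NE by (auto simp: NE_def strat_simplex_def)
  have nec: "\<And>i j. i \<in> supp V x \<Longrightarrow> E i j \<Longrightarrow> u j (x j) \<le> u i (x i)"
    using NE by (auto simp: NE_def neighbours_def)
  have lt0: "\<And>i. i \<in> supp V x \<Longrightarrow> u i (x i) < u i 0"
  proof -
    fix i assume i: "i \<in> supp V x"
    hence iV: "i \<in> V" and "x i \<noteq> 0" by (auto simp: supp_def)
    with xnn have "x i > 0" by force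
    show "u i (x i) < u i 0"
      by (rule mono0[OF u_deriv[OF iV] p_deriv[OF iV] p_conc[OF iV] \<open>x i > 0\<close>])
  qed
  have le0: "\<And>i. i \<in> V \<Longrightarrow> u i (x i) \<le> u i 0"
  proof -
    fix i assume iV: "i \<in> V"
    show "u i (x i) \<le> u i 0"
    proof (cases "i \<in> supp V x")
      case True then show ?thesis using lt0[OF True] by simp
    next
      case False then have "x i = 0" using iV by (auto simp: supp_def)
      then show ?thesis by simp
    qed
  qed
  have key: "u j (x j) \<le> u i (x i)" if i: "i \<in> supp V x" and j: "j \<in> supp V x" and ij: "i \<noteq> j" for i j
  proof -
    have iV: "i \<in> V" and jV: "j \<in> V" using i j by (auto simp: supp_def)
    obtain \<pi> where pth: "is_path V E \<pi>" and hd: "hd \<pi> = i" and lst: "last \<pi> = j"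
      and qc: "qc_path (\<lambda>i. u i 0) \<pi>"
      using qch iV jV ij unfolding quasi_concave_hill_def by blast
    define n where "n = length \<pi>"
    have ne: "\<pi> \<noteq> []" and sV: "set \<pi> \<subseteq> V"
      and adj: "\<And>k. Suc k < n \<Longrightarrow> E (\<pi> ! k) (\<pi> ! Suc k)"
      using pth by (auto simp: is_path_def n_def)
    have n0: "n > 0" using ne by (simp add: n_def)
    have p0: "\<pi> ! 0 = i" using hd ne by (simp add: hd_conv_nth)
    have pl: "\<pi> ! (n - 1) = j" using lst ne by (simp add: last_conv_nth n_def)
    have inV: "\<And>k. k < n \<Longrightarrow> \<pi> ! k \<in> V" using sV by (auto simp: n_def)
    define v where "v k = u (\<pi> ! k) (x (\<pi> ! k))" for k
    define a where "a k = u (\<pi> ! k) 0" for k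
    have chain: "m < n \<longrightarrow> (\<forall>k<m. \<pi> ! k \<in> supp V x) \<longrightarrow> v m \<le> v 0" for m
    proof (induction m)
      case 0 then show ?case by simp
    next
      case (Suc m)
      show ?case
      proof (intro impI)
        assume h1: "Suc m < n" and h2: "\<forall>k<Suc m. \<pi> ! k \<in> supp V x"
        have "v (Suc m) \<le> v m" unfolding v_def using nec[OF _ adj[OF h1]] h2 by simp
        also have "v m \<le> v 0" using Suc h1 h2 by simp
        finally show "v (Suc m) \<le> v 0" .
      qed
    qed
    show ?thesis
    proof (cases "\<exists>k<n. \<pi> ! k \<notin> supp V x")
      case False
      then have "v (n - 1) \<le> v 0" using chain[of "n - 1"] n0 by auto
      then show ?thesis using p0 pl by (simp add: v_def)
    next
      case True
      define k where "k = (LEAST k. k < n \<and> \<pi> ! k \<notin> supp V x)"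
      have k: "k < n" "\<pi> ! k \<notin> supp V x" using LeastI_ex[OF True] by (auto simp: k_def)
      have bef: "\<forall>k'<k. \<pi> ! k' \<in> supp V x"
      proof (intro allI impI)
        fix k' assume kk: "k' < k"
        have "\<not> (k' < n \<and> \<pi> ! k' \<notin> supp V x)"
          using not_less_Least[of k' "\<lambda>k. k < n \<and> \<pi> ! k \<notin> supp V x"] kk unfolding k_def by blast
        with kk k(1) show "\<pi> ! k' \<in> supp V x" by simp
      qed
      have k0: "k \<noteq> 0"
      proof
        assume "k = 0"
        then have "\<pi> ! k = i" using p0 by simp
        then show False using k(2) i by simp
      qed
      have vk: "v k \<le> v 0" using chain[of k] k bef by auto
      have xk: "x (\<pi> ! k) = 0" using k inV[OF k(1)] by (auto simp: supp_def)
      hence vka: "v k = a k" by (simp add: v_def a_def)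
      have km: "\<pi> ! (k - 1) \<in> supp V x" using bef k0 by simp
      have "v k \<le> v (k - 1)" unfolding v_def
        using nec[OF km, of "\<pi> ! k"] adj[of "k - 1"] k k0 by simp
      moreover have "v (k - 1) < a (k - 1)" using lt0[OF km] by (simp add: v_def a_def)
      ultimately have "a k < a (k - 1)" using vka by simp
      moreover have "a k \<ge> min (a (k - 1)) (a (n - 1))"
        proof -
        have "k - 1 \<le> k" "k \<le> n - 1" "n - 1 < length \<pi>" using k n0 by (auto simp: n_def)
        then show ?thesis using qc unfolding qc_path_def a_def by blast
      qed
      ultimately have "a (n - 1) \<le> a k" by linarith
      moreover have "v (n - 1) \<le> a (n - 1)" unfolding v_def a_def using le0 inV n0 by simp
      ultimately have "v (n - 1) \<le> v 0" using vk vka by linarith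
      then show ?thesis using p0 pl by (simp add: v_def)
    qed
  qed
  show ?thesis
  proof (intro ballI)
    fix i j assume i: "i \<in> supp V x" and j: "j \<in> supp V x"
    show "u i (x i) = u j (x j)"
    proof (cases "i = j")
      case False
      then show ?thesis using key[OF i j] key[OF j i] by simp
    qed simp
  qed
qed

end
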